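(* Let $(M^n,g)$ be a Riemannian manifold with $n/2$ an even integer, $x\in M$ and $\varepsilon\in\{+,-\}$. Suppose $W^{-\varepsilon}(x)=0$ and there are a non-zero $n/2$-form $u\in\Lambda^{n/2}T^*_xM$ with $*u=\varepsilon u$ and $\lambda\in\mathbb R$ such that $\mathcal R_{\varepsilon,n/2}(x)=\lambda\,\mathrm{Id}-u\otimes u$. Then $n=4$ and $u$ is colinear to $g(J\cdot,\cdot)$ for some $g$-orthogonal complex structure $J$ on $T_xM$.
   Context: The Bochner–Weitzenböck curvature $\mathcal R_k$ is the field of symmetric endomorphisms of $\Lambda^kT^*M$ such that $(dd^*+d^*d)\xi=\nabla^*\nabla\xi+\mathcal R_k\xi$ for every $k$-form $\xi$. When $n/2$ is even, the Hodge star satisfies $*^2=\mathrm{Id}$ on $\Lambda^{n/2}$; $\Lambda^{n/2}_\pm$ are its $\pm1$ eigenspaces, $\mathcal R_{\pm,n/2}$ the restrictions of $\mathcal R_{n/2}$ (which commutes with $*$) to them, and $W^\pm$ the corresponding parts of the Weyl tensor. $u\otimes u$ is $\alpha\mapsto\langle u,\alpha\rangle u$. *)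

theory Defs
  imports Complex_Main "HOL-Combinatorics.Permutations"
begin

text \<open>Pointwise (algebraic) setting at a point x of an n-dimensional Riemannian
manifold: we identify (T_xM, g_x) with R^n with its standard inner product via an
orthonormal (oriented) basis e_0, ..., e_(n-1). The Riemann curvature tensor at x
is given by its components R i j k l = g(R(e_i,e_j)e_k, e_l), normalised so that
R i j i j is the sectional curvature of the plane spanned by e_i, e_j.
A k-form is given by its components on index lists: w [i1,...,ik] = w(e_i1,...,e_ik).\<close>

definition idx_lists :: "nat \<Rightarrow> nat \<Rightarrow> nat list set" where
  "idx_lists n k = {xs. length xs = k \<and> set xs \<subseteq> {..<n}}"

definition is_form :: "nat \<Rightarrow> nat \<Rightarrow> (nat list \<Rightarrow> real) \<Rightarrow> bool" where
  "is_form n k w \<longleftrightarrow>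
     (\<forall>xs. xs \<notin> idx_lists n k \<longrightarrow> w xs = 0) \<and>
     (\<forall>xs i j. xs \<in> idx_lists n k \<longrightarrow> i < j \<longrightarrow> j < k \<longrightarrow>
        w (xs[i := xs ! j, j := xs ! i]) = - w xs)"

text \<open>Inner product on k-forms (the basis e^I, I increasing, is orthonormal).\<close>
definition form_inner :: "nat \<Rightarrow> nat \<Rightarrow> (nat list \<Rightarrow> real) \<Rightarrow> (nat list \<Rightarrow> real) \<Rightarrow> real" where
  "form_inner n k a b = (\<Sum>xs\<in>idx_lists n k. a xs * b xs) / fact k"

definition levi_civita :: "nat \<Rightarrow> nat list \<Rightarrow> real" where
  "levi_civita n xs =
     (if length xs = n \<and> distinct xs \<and> set xs = {..<n}
      then of_int (sign (\<lambda>i. if i < n then xs ! i else i)) else 0)"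

definition hodge :: "nat \<Rightarrow> nat \<Rightarrow> (nat list \<Rightarrow> real) \<Rightarrow> (nat list \<Rightarrow> real)" where
  "hodge n k a = (\<lambda>ys. if ys \<in> idx_lists n (n - k)
      then (\<Sum>xs\<in>idx_lists n k. a xs * levi_civita n (xs @ ys)) / fact k else 0)"

definition algebraic_curvature_tensor :: "nat \<Rightarrow> (nat \<Rightarrow> nat \<Rightarrow> nat \<Rightarrow> nat \<Rightarrow> real) \<Rightarrow> bool" where
  "algebraic_curvature_tensor n R \<longleftrightarrow>
    (\<forall>i<n. \<forall>j<n. \<forall>k<n. \<forall>l<n.
       R i j k l = - R j i k l \<and> R i j k l = - R i j l k \<and> R i j k l = R k l i j \<and>
       R i j k l + R j k i l + R k i j l = 0)"

definition ricci :: "nat \<Rightarrow> (nat \<Rightarrow> nat \<Rightarrow> nat \<Rightarrow> nat \<Rightarrow> real) \<Rightarrow> nat \<Rightarrow> nat \<Rightarrow> real" where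
  "ricci n R a b = (\<Sum>c<n. R c a c b)"

definition scal :: "nat \<Rightarrow> (nat \<Rightarrow> nat \<Rightarrow> nat \<Rightarrow> nat \<Rightarrow> real) \<Rightarrow> real" where
  "scal n R = (\<Sum>a<n. ricci n R a a)"

definition kron :: "nat \<Rightarrow> nat \<Rightarrow> real" where
  "kron a b = (if a = b then 1 else 0)"

definition kn_prod :: "(nat \<Rightarrow> nat \<Rightarrow> real) \<Rightarrow> (nat \<Rightarrow> nat \<Rightarrow> real) \<Rightarrow> nat \<Rightarrow> nat \<Rightarrow> nat \<Rightarrow> nat \<Rightarrow> real" where
  "kn_prod h k a b c d = h a c * k b d + h b d * k a c - h a d * k b c - h b c * k a d"

definition weyl :: "nat \<Rightarrow> (nat \<Rightarrow> nat \<Rightarrow> nat \<Rightarrow> nat \<Rightarrow> real) \<Rightarrow> nat \<Rightarrow> nat \<Rightarrow> nat \<Rightarrow> nat \<Rightarrow> real" where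
  "weyl n R a b c d = R a b c d -
     kn_prod (\<lambda>i j. ricci n R i j - scal n R / (2 * (real n - 1)) * kron i j) kron a b c d
       / (real n - 2)"

text \<open>Bochner--Weitzenboeck curvature R_k acting on k-forms (so that
dd^* + d^*d = nabla^* nabla + R_k), in components:
(R_k w)_{a_1..a_k} = sum_s Ric_{a_s b} w_{..b..} - 2 sum_{s<t} R_{a_s b a_t c} w_{..b..c..}.\<close>
definition weitz :: "nat \<Rightarrow> (nat \<Rightarrow> nat \<Rightarrow> nat \<Rightarrow> nat \<Rightarrow> real) \<Rightarrow> nat \<Rightarrow>
    (nat list \<Rightarrow> real) \<Rightarrow> (nat list \<Rightarrow> real)" where
  "weitz n R k w = (\<lambda>xs. if xs \<in> idx_lists n k then
      (\<Sum>s<k. \<Sum>b<n. ricci n R (xs ! s) b * w (xs[s := b]))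
      - 2 * (\<Sum>s<k. \<Sum>t\<in>{s<..<k}. \<Sum>b<n. \<Sum>c<n.
               R (xs ! s) b (xs ! t) c * w (xs[s := b, t := c]))
    else 0)"

text \<open>Action of the Weyl tensor on k-forms (the Weyl part of R_k); W^{+-} are its
restrictions to the (+-1)-eigenspaces of the Hodge star on middle-degree forms.\<close>
definition weyl_op :: "nat \<Rightarrow> (nat \<Rightarrow> nat \<Rightarrow> nat \<Rightarrow> nat \<Rightarrow> real) \<Rightarrow> nat \<Rightarrow>
    (nat list \<Rightarrow> real) \<Rightarrow> (nat list \<Rightarrow> real)" where
  "weyl_op n R k = weitz n (weyl n R) k"

text \<open>Orthogonal complex structure J on R^n, J e_a = sum_b J b a e_b.\<close>
definition orth_complex_structure :: "nat \<Rightarrow> (nat \<Rightarrow> nat \<Rightarrow> real) \<Rightarrow> bool" where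
  "orth_complex_structure n J \<longleftrightarrow>
     (\<forall>a<n. \<forall>b<n. (\<Sum>c<n. J a c * J c b) = - kron a b) \<and>
     (\<forall>a<n. \<forall>b<n. (\<Sum>c<n. J c a * J c b) = kron a b)"

end

theory Submission imports Defs "HOL-Combinatorics.Multiset_Permutations" begin

definition pf :: "nat \<Rightarrow> nat list \<Rightarrow> nat \<Rightarrow> nat" where
  "pf n zs = (\<lambda>i. if i < n then zs ! i else i)"

definition plist :: "nat \<Rightarrow> nat list \<Rightarrow> bool" where
  "plist n zs \<longleftrightarrow> length zs = n \<and> distinct zs \<and> set zs = {..<n}"

lemma pf_permutes: assumes "plist n zs" shows "pf n zs permutes {..<n}"
proof (rule bij_imp_permutes)
  have "bij_betw ((!) zs) {..<n} {..<n}"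
    using assms unfolding plist_def by (intro bij_betw_nth) auto
  then show "bij_betw (pf n zs) {..<n} {..<n}"
    by (rule bij_betw_cong[THEN iffD1, rotated]) (auto simp: pf_def)
qed (auto simp: pf_def)

lemma pf_permutation: "plist n zs \<Longrightarrow> permutation (pf n zs)"
  by (rule permutes_imp_permutation[OF _ pf_permutes]) auto

lemma levi_def2: "levi_civita n zs = (if plist n zs then of_int (sign (pf n zs)) else 0)"
  unfolding levi_civita_def plist_def pf_def by simp

lemma sign_cases2: "sign p = 1 \<or> sign p = -1"
  by (simp add: sign_def)

lemma levi_sq: "plist n zs \<Longrightarrow> levi_civita n zs * levi_civita n zs = 1"
  unfolding levi_def2 using sign_cases2[of "pf n zs"] by auto

lemma levi_zero: "\<not> plist n zs \<Longrightarrow> levi_civita n zs = 0"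
  unfolding levi_def2 by auto

lemma levi_swap:
  assumes i: "i < length zs" and j: "j < length zs" and ij: "i \<noteq> j"
  shows "levi_civita n (zs[i := zs ! j, j := zs ! i]) = - levi_civita n zs"
proof (cases "plist n zs")
  case True
  let ?z = "zs[i := zs ! j, j := zs ! i]"
  have pl: "plist n ?z" using True i j unfolding plist_def by (simp add: distinct_swap set_swap)
  have eq: "pf n ?z = pf n zs \<circ> Transposition.transpose i j"
  proof
    fix x show "pf n ?z x = (pf n zs \<circ> Transposition.transpose i j) x"
      using True i j unfolding pf_def plist_def
      by (auto simp: nth_list_update transpose_def)
  qed
  have "sign (pf n ?z) = - sign (pf n zs)"
    unfolding eq by (simp add: sign_compose pf_permutation[OF True] permutation_swap_id sign_swap_id ij)
  then show ?thesis using pl True unfolding levi_def2 by simp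
next
  case False
  then have "\<not> plist n (zs[i := zs ! j, j := zs ! i])" using i j unfolding plist_def
    by (simp add: distinct_swap set_swap)
  then show ?thesis using False by (simp add: levi_zero)
qed


lemma form_out: "is_form n k w \<Longrightarrow> xs \<notin> idx_lists n k \<Longrightarrow> w xs = 0"
  unfolding is_form_def by auto

lemma form_swap:
  assumes "is_form n k w" "xs \<in> idx_lists n k" "i < k" "j < k" "i \<noteq> j"
  shows "w (xs[i := xs ! j, j := xs ! i]) = - w xs"
proof (cases "i < j")
  case True then show ?thesis using assms unfolding is_form_def by auto
next
  case False
  then have "j < i" using assms by auto
  moreover have "xs[i := xs ! j, j := xs ! i] = xs[j := xs ! i, i := xs ! j]"
    using assms by (simp add: list_update_swap)
  ultimately show ?thesis using assms unfolding is_form_def by auto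
qed

lemma form_nondistinct:
  assumes "is_form n k w" "\<not> distinct xs"
  shows "w xs = 0"
proof (cases "xs \<in> idx_lists n k")
  case False then show ?thesis using assms form_out by auto
next
  case True
  then have lk: "length xs = k" by (simp add: idx_lists_def)
  from assms(2) obtain i j where ij: "i < length xs" "j < length xs" "i \<noteq> j" "xs ! i = xs ! j"
    by (auto simp: distinct_conv_nth)
  have "xs[i := xs ! j, j := xs ! i] = xs" using ij by (metis list_update_id)
  then show ?thesis using form_swap[OF assms(1) True, of i j] ij lk by auto
qed

lemma form_perm:
  assumes w: "is_form n k w" and p: "p permutes {..<k}"
  shows "\<forall>xs\<in>idx_lists n k. w (map (\<lambda>i. xs ! (p i)) [0..<k]) = of_int (sign p) * w xs"
  using p finite_lessThan[of k]
proof (induction p rule: permutes_induct)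
  case id
  show ?case
  proof
    fix xs assume "xs \<in> idx_lists n k"
    then have "map (\<lambda>i. xs ! (id i)) [0..<k] = xs" by (auto simp: idx_lists_def intro: nth_equalityI)
    then show "w (map (\<lambda>i. xs ! (id i)) [0..<k]) = of_int (sign id) * w xs" by simp
  qed
next
  case (swap a b p)
  show ?case
  proof
    fix xs assume xs: "xs \<in> idx_lists n k"
    let ?ys = "xs[a := xs ! b, b := xs ! a]"
    have lxs: "length xs = k" using xs by (simp add: idx_lists_def)
    have ys: "?ys \<in> idx_lists n k" using xs swap(1,2) unfolding idx_lists_def
      by (auto simp: set_swap)
    have pk: "i < k \<Longrightarrow> p i < k" for i using permutes_in_image[OF swap(4)] by auto
    have "map (\<lambda>i. xs ! ((Transposition.transpose a b \<circ> p) i)) [0..<k] = map (\<lambda>i. ?ys ! (p i)) [0..<k]"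
      using swap(1,2) lxs pk by (auto simp: nth_list_update transpose_def)
    also have "w \<dots> = of_int (sign p) * w ?ys" using swap(5) ys by blast
    also have "w ?ys = - w xs" using form_swap[OF w xs, of a b] swap(1,2,3) by auto
    also have "of_int (sign p) * - w xs = of_int (sign (Transposition.transpose a b \<circ> p)) * w xs"
      using swap(3) by (simp add: sign_compose permutation_swap_id sign_swap_id
            permutes_imp_permutation[OF _ swap(4)])
    finally show "w (map (\<lambda>i. xs ! ((Transposition.transpose a b \<circ> p) i)) [0..<k]) =
        of_int (sign (Transposition.transpose a b \<circ> p)) * w xs" .
  qed
qed


lemma swap_two_lists:
  "(P @ a # A @ C @ b # B) [length P := (P @ a # A @ C @ b # B) ! (length P + 1 + length A + length C),
      length P + 1 + length A + length C := (P @ a # A @ C @ b # B) ! length P]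
   = P @ b # A @ C @ a # B"
  by (simp add: list_update_append nth_append)

lemma levi_block:
  "length A = length B \<Longrightarrow>
   levi_civita n (P @ A @ C @ B @ D) = (-1) ^ length A * levi_civita n (P @ B @ C @ A @ D)"
proof (induction A B arbitrary: P C rule: list_induct2)
  case Nil then show ?case by simp
next
  case (Cons a A b B)
  let ?zs = "P @ a # A @ C @ b # (B @ D)"
  have "?zs[length P := ?zs ! (length P + 1 + length A + length C),
      length P + 1 + length A + length C := ?zs ! length P] = P @ b # A @ C @ a # (B @ D)"
    by (rule swap_two_lists)
  then have "levi_civita n (P @ b # A @ C @ a # (B @ D)) = - levi_civita n ?zs"
    using levi_swap[of "length P" ?zs "length P + 1 + length A + length C" n] by simp
  moreover have "levi_civita n (P @ b # A @ C @ a # (B @ D)) =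
     (-1) ^ length A * levi_civita n (P @ b # B @ C @ a # (A @ D))"
    using Cons(2)[of "P @ [b]" "C @ [a]"] by simp
  moreover have "levi_civita n (P @ b # B @ C @ a # (A @ D)) = - levi_civita n (P @ a # B @ C @ b # (A @ D))"
  proof -
    let ?ws = "P @ a # B @ C @ b # (A @ D)"
    have "?ws[length P := ?ws ! (length P + 1 + length B + length C),
      length P + 1 + length B + length C := ?ws ! length P] = P @ b # B @ C @ a # (A @ D)"
      by (rule swap_two_lists)
    then show ?thesis using levi_swap[of "length P" ?ws "length P + 1 + length B + length C" n] by simp
  qed
  ultimately show ?case by simp
qed

lemma levi_blockswap:
  "length A = length B \<Longrightarrow> even (length A) \<Longrightarrow> levi_civita n (A @ B) = levi_civita n (B @ A)"
  using levi_block[of A B n "[]" "[]" "[]"] by simp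


definition lfront :: "nat \<Rightarrow> nat \<Rightarrow> nat list \<Rightarrow> nat list \<Rightarrow> real" where
  "lfront n k Z = (\<lambda>xs. if xs \<in> idx_lists n k then levi_civita n (xs @ Z) else 0)"

lemma lfront_form: "is_form n k (lfront n k Z)"
  unfolding is_form_def
proof (intro conjI allI impI)
  fix xs i j assume xs: "xs \<in> idx_lists n k" and ij: "i < j" "j < k"
  then have lx: "length xs = k" by (simp add: idx_lists_def)
  have ys: "xs[i := xs ! j, j := xs ! i] \<in> idx_lists n k" using xs ij lx
    unfolding idx_lists_def by (auto simp: set_swap)
  have "(xs @ Z)[i := (xs @ Z) ! j, j := (xs @ Z) ! i] = xs[i := xs ! j, j := xs ! i] @ Z"
    using ij lx by (simp add: list_update_append nth_append)
  then show "lfront n k Z (xs[i := xs ! j, j := xs ! i]) = - lfront n k Z xs"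
    using levi_swap[of i "xs @ Z" j n] xs ys ij lx unfolding lfront_def by auto
qed (auto simp: lfront_def)

lemma perm_witness:
  assumes I: "distinct I" "length I = k" and xs: "distinct xs" "set xs = set I"
  shows "\<exists>p. p permutes {..<k} \<and> xs = map (\<lambda>i. I ! (p i)) [0..<k]"
proof -
  have lx: "length xs = k" using I xs by (metis distinct_card)
  have bI: "bij_betw ((!) I) {..<k} (set I)" using I by (intro bij_betw_nth) auto
  have bx: "bij_betw ((!) xs) {..<k} (set I)" using xs lx by (intro bij_betw_nth) auto
  define p where "p = (\<lambda>i. if i < k then inv_into {..<k} ((!) I) (xs ! i) else i)"
  have "bij_betw (inv_into {..<k} ((!) I) \<circ> (!) xs) {..<k} {..<k}"
    using bij_betw_trans[OF bx bij_betw_inv_into[OF bI]] .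
  then have "bij_betw p {..<k} {..<k}"
    by (rule bij_betw_cong[THEN iffD1, rotated]) (auto simp: p_def)
  then have pp: "p permutes {..<k}" by (rule bij_imp_permutes) (auto simp: p_def)
  have "xs = map (\<lambda>i. I ! (p i)) [0..<k]"
  proof (rule nth_equalityI)
    show "length xs = length (map (\<lambda>i. I ! (p i)) [0..<k])" using lx by simp
    fix i assume "i < length xs"
    then have i: "i < k" using lx by simp
    then have "xs ! i \<in> set I" using xs lx by (metis nth_mem)
    then have "I ! (inv_into {..<k} ((!) I) (xs ! i)) = xs ! i"
      using bI by (simp add: bij_betw_def f_inv_into_f)
    then show "xs ! i = map (\<lambda>i. I ! (p i)) [0..<k] ! i" using i by (simp add: p_def)
  qed
  then show ?thesis using pp by blast
qed

lemma sum_forms: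
  assumes w: "is_form n k w" and v: "is_form n k v"
    and I: "distinct I" "I \<in> idx_lists n k"
    and supp: "\<And>xs. xs \<in> idx_lists n k \<Longrightarrow> v xs \<noteq> 0 \<Longrightarrow> set xs = set I"
  shows "(\<Sum>xs\<in>idx_lists n k. w xs * v xs) = fact k * (w I * v I)"
proof -
  have lI: "length I = k" and sI: "set I \<subseteq> {..<n}" using I by (auto simp: idx_lists_def)
  have fin: "finite (idx_lists n k)"
    unfolding idx_lists_def using finite_lists_length_eq[of "{..<n}" k] by (simp add: conj_commute)
  have sub: "permutations_of_set (set I) \<subseteq> idx_lists n k"
    using lI sI I by (auto simp: permutations_of_set_def idx_lists_def distinct_card[symmetric])
  have "(\<Sum>xs\<in>idx_lists n k. w xs * v xs) = (\<Sum>xs\<in>permutations_of_set (set I). w xs * v xs)"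
  proof (rule sum.mono_neutral_right[OF fin sub])
    show "\<forall>xs\<in>idx_lists n k - permutations_of_set (set I). w xs * v xs = 0"
    proof
      fix xs assume xs: "xs \<in> idx_lists n k - permutations_of_set (set I)"
      show "w xs * v xs = 0"
      proof (cases "v xs = 0")
        case False
        then have "set xs = set I" using supp xs by auto
        then have "\<not> distinct xs" using xs by (auto simp: permutations_of_set_def)
        then show ?thesis using form_nondistinct[OF w] by simp
      qed simp
    qed
  qed
  also have "\<dots> = (\<Sum>xs\<in>permutations_of_set (set I). w I * v I)"
  proof (rule sum.cong[OF refl])
    fix xs assume xs: "xs \<in> permutations_of_set (set I)"
    then obtain p where p: "p permutes {..<k}" "xs = map (\<lambda>i. I ! (p i)) [0..<k]"
      using perm_witness[OF I(1) lI, of xs] by (auto simp: permutations_of_set_def)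
    have "w xs = of_int (sign p) * w I" using form_perm[OF w p(1)] I p(2) by auto
    moreover have "v xs = of_int (sign p) * v I" using form_perm[OF v p(1)] I p(2) by auto
    ultimately show "w xs * v xs = w I * v I"
      using sign_cases2[of p] by auto
  qed
  also have "\<dots> = fact k * (w I * v I)" using I lI by (simp add: distinct_card)
  finally show ?thesis .
qed


lemma plist_support:
  assumes "plist n (xs @ Y)" "plist n (I @ Y)" shows "set xs = set I"
  using assms unfolding plist_def by auto

lemma plist_comm: "plist n (I @ Y) \<Longrightarrow> plist n (Y @ I)"
  unfolding plist_def by auto

lemma hodge_lfront:
  assumes n: "n = 2 * k" "even k" and I: "distinct I" "I \<in> idx_lists n k"
    and Y: "Y \<in> idx_lists n k" and pl: "plist n (I @ Y)"
  shows "hodge n k (lfront n k Y) = (\<lambda>ys. levi_civita n (I @ Y) * lfront n k I ys)"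
proof
  fix ys
  have nk: "n - k = k" using n by simp
  show "hodge n k (lfront n k Y) ys = levi_civita n (I @ Y) * lfront n k I ys"
  proof (cases "ys \<in> idx_lists n k")
    case False then show ?thesis by (simp add: hodge_def nk lfront_def)
  next
    case True
    have ly: "length ys = k" using True by (simp add: idx_lists_def)
    have lI: "length I = k" using I by (simp add: idx_lists_def)
    have "(\<Sum>xs\<in>idx_lists n k. lfront n k Y xs * levi_civita n (xs @ ys)) =
          (\<Sum>xs\<in>idx_lists n k. lfront n k ys xs * lfront n k Y xs)"
      by (rule sum.cong) (auto simp: lfront_def)
    also have "\<dots> = fact k * (lfront n k ys I * lfront n k Y I)"
    proof (rule sum_forms[OF lfront_form lfront_form I])
      fix xs assume "xs \<in> idx_lists n k" "lfront n k Y xs \<noteq> 0"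
      then have "plist n (xs @ Y)" by (auto simp: lfront_def levi_def2 split: if_splits)
      then show "set xs = set I" using plist_support pl by blast
    qed
    also have "\<dots> = fact k * (levi_civita n (I @ Y) * lfront n k I ys)"
      using I True levi_blockswap[of I ys n] ly lI n by (simp add: lfront_def)
    finally show ?thesis using True by (simp add: hodge_def nk)
  qed
qed


lemma kron_sum1: "a < n \<Longrightarrow> (\<Sum>b<n. kron b a * G b) = G a"
  unfolding kron_def by (simp add: if_distrib[of "\<lambda>x. x * _"] sum.delta' cong: if_cong)

lemma kron_sum2: "a < n \<Longrightarrow> (\<Sum>b<n. kron a b * G b) = G a"
  unfolding kron_def by (simp add: if_distrib[of "\<lambda>x. x * _"] sum.delta cong: if_cong)

lemma weitz_local:
  assumes "\<And>s b. s < k \<Longrightarrow> b < n \<Longrightarrow> f (J[s := b]) = 0"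
    and "\<And>s t b c. s < t \<Longrightarrow> t < k \<Longrightarrow> b < n \<Longrightarrow> c < n \<Longrightarrow> f (J[s := b, t := c]) = 0"
  shows "weitz n X k f J = 0"
  unfolding weitz_def using assms by simp

lemma weitz_lin_form:
  "weitz n X k (\<lambda>xs. f xs + a * g xs) J = weitz n X k f J + a * weitz n X k g J"
  unfolding weitz_def
  by (simp add: algebra_simps sum.distrib sum_distrib_left)

lemma ricci_lin: "ricci n (\<lambda>a b c d. A a b c d + m * B a b c d) x y = ricci n A x y + m * ricci n B x y"
  unfolding ricci_def by (simp add: sum.distrib sum_distrib_left)

lemma weitz_lin_R:
  "weitz n (\<lambda>a b c d. A a b c d + m * B a b c d) k f J = weitz n A k f J + m * weitz n B k f J"
  unfolding weitz_def ricci_lin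
  by (simp add: algebra_simps sum.distrib sum_distrib_left)


lemma kron_same[simp]: "kron c c = 1" by (simp add: kron_def)

lemma ricci_kn:
  assumes "a < n" "b < n"
  shows "ricci n (kn_prod h kron) a b = (\<Sum>c<n. h c c) * kron a b + (real n - 2) * h a b"
proof -
  have "ricci n (kn_prod h kron) a b =
     (\<Sum>c<n. h c c * kron a b) + (\<Sum>c<n. h a b * kron c c) - (\<Sum>c<n. kron a c * h c b)
       - (\<Sum>c<n. kron c b * h a c)"
    unfolding ricci_def kn_prod_def by (simp add: sum.distrib sum_subtractf algebra_simps)
  also have "\<dots> = (\<Sum>c<n. h c c) * kron a b + real n * h a b - h a b - h a b"
    using assms by (simp add: kron_sum1 kron_sum2 sum_distrib_right[symmetric] kron_same)
  finally show ?thesis by (simp add: algebra_simps)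
qed

lemma pair_sum: "(\<Sum>s<k. \<Sum>t\<in>{s<..<k}. g s + g t) = (real k - 1) * (\<Sum>s<k. g s :: real)"
proof (induction k)
  case 0 then show ?case by simp
next
  case (Suc k)
  have e: "{k<..<Suc k} = {}" by auto
  have "(\<Sum>s<Suc k. \<Sum>t\<in>{s<..<Suc k}. g s + g t) =
        (\<Sum>s<k. \<Sum>t\<in>{s<..<Suc k}. g s + g t)"
    by (simp add: e)
  also have "\<dots> = (\<Sum>s<k. (\<Sum>t\<in>{s<..<k}. g s + g t) + (g s + g k))"
  proof (rule sum.cong[OF refl])
    fix s assume "s \<in> {..<k}"
    then have "{s<..<Suc k} = insert k {s<..<k}" by auto
    then show "(\<Sum>t\<in>{s<..<Suc k}. g s + g t) = (\<Sum>t\<in>{s<..<k}. g s + g t) + (g s + g k)"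
      by simp
  qed
  also have "\<dots> = (real k - 1) * (\<Sum>s<k. g s) + (\<Sum>s<k. g s) + real k * g k"
    using Suc by (simp add: sum.distrib)
  finally show ?case by (simp add: algebra_simps)
qed

lemma weitz_kn:
  assumes f: "is_form n k f" and J: "J \<in> idx_lists n k" "distinct J" and nk: "n = 2 * k"
    and hs: "\<And>a b. a < n \<Longrightarrow> b < n \<Longrightarrow> h a b = h b a"
  shows "weitz n (kn_prod h kron) k f J = real k * (\<Sum>c<n. h c c) * f J"
proof -
  have lJ: "length J = k" using J by (auto simp: idx_lists_def)
  have sJ: "J ! s < n" if "s < k" for s
  proof -
    have "J ! s \<in> set J" using that lJ by simp
    then show ?thesis using J unfolding idx_lists_def by auto
  qed
  define tr where "tr = (\<Sum>c<n. h c c)"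
  define g where "g s = (\<Sum>b<n. h (J ! s) b * f (J[s := b]))" for s
  have S1: "(\<Sum>s<k. \<Sum>b<n. ricci n (kn_prod h kron) (J ! s) b * f (J[s := b])) =
            real k * tr * f J + (real n - 2) * (\<Sum>s<k. g s)"
  proof -
    have "(\<Sum>s<k. \<Sum>b<n. ricci n (kn_prod h kron) (J ! s) b * f (J[s := b])) =
          (\<Sum>s<k. tr * f J + (real n - 2) * g s)"
    proof (rule sum.cong[OF refl])
      fix s assume s: "s \<in> {..<k}"
      have "(\<Sum>b<n. ricci n (kn_prod h kron) (J ! s) b * f (J[s := b])) =
            (\<Sum>b<n. kron (J ! s) b * (tr * f (J[s := b])) + (real n - 2) * (h (J ! s) b * f (J[s := b])))"
        using sJ s by (intro sum.cong) (auto simp: ricci_kn tr_def algebra_simps)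
      also have "\<dots> = tr * f J + (real n - 2) * g s"
        using sJ s by (simp add: sum.distrib kron_sum2 g_def sum_distrib_left)
      finally show "(\<Sum>b<n. ricci n (kn_prod h kron) (J ! s) b * f (J[s := b])) = tr * f J + (real n - 2) * g s" .
    qed
    then show ?thesis by (simp add: sum.distrib sum_distrib_left)
  qed
  have S2: "(\<Sum>b<n. \<Sum>c<n. kn_prod h kron (J ! s) b (J ! t) c * f (J[s := b, t := c])) = g s + g t"
    if st: "s < t" "t < k" for s t
  proof -
    let ?x = "J ! s" and ?y = "J ! t"
    have xy: "?x < n" "?y < n" "?x \<noteq> ?y" using sJ st J(2) lJ by (auto simp: nth_eq_iff_index_eq)
    have "(\<Sum>b<n. \<Sum>c<n. kn_prod h kron ?x b ?y c * f (J[s := b, t := c])) =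
          (\<Sum>b<n. \<Sum>c<n. kron b c * (h ?x ?y * f (J[s := b, t := c])))
          + (\<Sum>b<n. \<Sum>c<n. kron ?x ?y * (h b c * f (J[s := b, t := c])))
          - (\<Sum>b<n. kron b ?y * (\<Sum>c<n. h ?x c * f (J[s := b, t := c])))
          - (\<Sum>b<n. \<Sum>c<n. kron ?x c * (h b ?y * f (J[s := b, t := c])))"
      unfolding kn_prod_def by (simp add: sum.distrib sum_subtractf algebra_simps sum_distrib_left)
    also have "(\<Sum>b<n. \<Sum>c<n. kron b c * (h ?x ?y * f (J[s := b, t := c]))) = 0"
    proof -
      have "(\<Sum>b<n. \<Sum>c<n. kron b c * (h ?x ?y * f (J[s := b, t := c]))) =
            (\<Sum>b<n. h ?x ?y * f (J[s := b, t := b]))"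
        by (rule sum.cong[OF refl]) (simp add: kron_sum2)
      also have "\<dots> = 0"
      proof (rule sum.neutral, rule ballI)
        fix b assume "b \<in> {..<n}"
        have e: "J[s := b, t := b] ! s = J[s := b, t := b] ! t" using st lJ by (simp add: nth_list_update)
        have "\<not> distinct (J[s := b, t := b])"
        proof
          assume "distinct (J[s := b, t := b])"
          then show False using nth_eq_iff_index_eq[of "J[s := b, t := b]" s t] e st lJ by simp
        qed
        then show "h ?x ?y * f (J[s := b, t := b]) = 0" using form_nondistinct[OF f] by simp
      qed
      finally show ?thesis .
    qed
    also have "(\<Sum>b<n. \<Sum>c<n. kron ?x ?y * (h b c * f (J[s := b, t := c]))) = 0"
      using xy by (simp add: kron_def)
    also have "(\<Sum>b<n. kron b ?y * (\<Sum>c<n. h ?x c * f (J[s := b, t := c]))) = - g s"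
    proof -
      have "(\<Sum>b<n. kron b ?y * (\<Sum>c<n. h ?x c * f (J[s := b, t := c]))) =
            (\<Sum>c<n. h ?x c * f (J[s := ?y, t := c]))"
        using xy by (simp add: kron_sum1)
      also have "\<dots> = (\<Sum>c<n. - (h ?x c * f (J[s := c])))"
      proof (rule sum.cong[OF refl])
        fix c assume c: "c \<in> {..<n}"
        let ?L = "J[s := c]"
        have L: "?L \<in> idx_lists n k" using J c lJ
          by (auto simp: idx_lists_def dest: subsetD[OF set_update_subset_insert])
        have "?L[s := ?L ! t, t := ?L ! s] = J[s := ?y, t := c]"
          using st lJ by (simp add: list_update_swap)
        then have "f (J[s := ?y, t := c]) = - f ?L"
          using form_swap[OF f L, of s t] st by simp
        then show "h ?x c * f (J[s := ?y, t := c]) = - (h ?x c * f (J[s := c]))" by simp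
      qed
      finally show ?thesis by (simp add: g_def sum_negf)
    qed
    also have "(\<Sum>b<n. \<Sum>c<n. kron ?x c * (h b ?y * f (J[s := b, t := c]))) = - g t"
    proof -
      have "(\<Sum>b<n. \<Sum>c<n. kron ?x c * (h b ?y * f (J[s := b, t := c]))) =
            (\<Sum>b<n. h b ?y * f (J[s := b, t := ?x]))"
        using xy by (simp add: kron_sum2)
      also have "\<dots> = (\<Sum>b<n. - (h ?y b * f (J[t := b])))"
      proof (rule sum.cong[OF refl])
        fix b assume b: "b \<in> {..<n}"
        let ?L = "J[t := b]"
        have L: "?L \<in> idx_lists n k" using J b lJ
          by (auto simp: idx_lists_def dest: subsetD[OF set_update_subset_insert])
        have "?L[s := ?L ! t, t := ?L ! s] = J[s := b, t := ?x]"
          using st lJ by (simp add: list_update_swap)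
        then have "f (J[s := b, t := ?x]) = - f ?L"
          using form_swap[OF f L, of s t] st by simp
        then show "h b ?y * f (J[s := b, t := ?x]) = - (h ?y b * f (J[t := b]))"
          using hs[of b ?y] b xy by simp
      qed
      finally show ?thesis by (simp add: g_def sum_negf)
    qed
    finally show ?thesis by simp
  qed
  have S2': "(\<Sum>s<k. \<Sum>t\<in>{s<..<k}. \<Sum>b<n. \<Sum>c<n. kn_prod h kron (J ! s) b (J ! t) c * f (J[s := b, t := c]))
      = (real k - 1) * (\<Sum>s<k. g s)"
    by (subst pair_sum[symmetric], intro sum.cong refl, auto simp: S2)
  have "weitz n (kn_prod h kron) k f J = real k * tr * f J + (real n - 2) * (\<Sum>s<k. g s) - 2 * ((real k - 1) * (\<Sum>s<k. g s))"
    using J(1) unfolding weitz_def S1 S2' by simp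
  also have "\<dots> = real k * tr * f J" using nk by (simp add: algebra_simps)
  finally show ?thesis by (simp add: tr_def)
qed


lemma hodge_lin:
  "hodge n k (\<lambda>xs. a * f xs + b * g xs) = (\<lambda>ys. a * hodge n k f ys + b * hodge n k g ys)"
  unfolding hodge_def by (auto simp: algebra_simps sum.distrib sum_distrib_left add_divide_distrib)

lemma form_lin: "is_form n k f \<Longrightarrow> is_form n k g \<Longrightarrow> is_form n k (\<lambda>xs. a * f xs + b * g xs)"
  unfolding is_form_def by auto

lemma lfront_vanish: "p < length L \<Longrightarrow> L ! p \<in> set I \<Longrightarrow> lfront n k I L = 0"
proof -
  assume "p < length L" "L ! p \<in> set I"
  then have "L ! p \<in> set L \<inter> set I" by simp
  then have "\<not> distinct (L @ I)" by auto
  then have "levi_civita n (L @ I) = 0" by (metis levi_zero plist_def)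
  then show ?thesis by (simp add: lfront_def)
qed

definition hsch :: "nat \<Rightarrow> (nat \<Rightarrow> nat \<Rightarrow> nat \<Rightarrow> nat \<Rightarrow> real) \<Rightarrow> nat \<Rightarrow> nat \<Rightarrow> real" where
  "hsch n R = (\<lambda>i j. ricci n R i j - scal n R / (2 * (real n - 1)) * kron i j)"

lemma R_decomp:
  assumes "real n - 2 \<noteq> 0"
  shows "R = (\<lambda>a b c d. weyl n R a b c d + (1 / (real n - 2)) * kn_prod (hsch n R) kron a b c d)"
  using assms unfolding weyl_def hsch_def by (auto simp: fun_eq_iff)

lemma hsch_sym:
  assumes "algebraic_curvature_tensor n R" "a < n" "b < n"
  shows "hsch n R a b = hsch n R b a"
proof -
  have "R c a c b = R c b c a" if "c < n" for c
    using assms(1) that assms(2,3) unfolding algebraic_curvature_tensor_def by blast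
  then have "ricci n R a b = ricci n R b a"
    unfolding ricci_def by (intro sum.cong) auto
  then show ?thesis unfolding hsch_def kron_def by auto
qed

lemma weitz_decomp:
  assumes curv: "algebraic_curvature_tensor n R" and nk: "n = 2 * k" and k: "k \<ge> 2"
    and f: "is_form n k f" and J: "J \<in> idx_lists n k" "distinct J"
  shows "weitz n R k f J = weitz n (weyl n R) k f J +
     real k * (\<Sum>c<n. hsch n R c c) / (real n - 2) * f J"
proof -
  have n2: "real n - 2 \<noteq> 0" using nk k by simp
  have "weitz n R k f J = weitz n (\<lambda>a b c d. weyl n R a b c d + (1 / (real n - 2)) * kn_prod (hsch n R) kron a b c d) k f J"
    by (rule arg_cong[where f="\<lambda>X. weitz n X k f J", OF R_decomp[OF n2]])
  also have "\<dots> = weitz n (weyl n R) k f J + (1 / (real n - 2)) * weitz n (kn_prod (hsch n R) kron) k f J"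
    by (rule weitz_lin_R)
  finally have e1: "weitz n R k f J = weitz n (weyl n R) k f J + (1 / (real n - 2)) * weitz n (kn_prod (hsch n R) kron) k f J" .
  have e2: "weitz n (kn_prod (hsch n R) kron) k f J = real k * (\<Sum>c<n. hsch n R c c) * f J"
    by (rule weitz_kn[OF f J nk]) (rule hsch_sym[OF curv])
  show ?thesis unfolding e1 e2 by simp
qed


lemma form_scale: "is_form n k f \<Longrightarrow> is_form n k (\<lambda>xs. a * f xs)"
  unfolding is_form_def by auto

lemma weitz_far:
  assumes J: "length J = k" "k \<ge> 4" "J ! 1 \<in> set I" "J ! 2 \<in> set I" "J ! 3 \<in> set I"
  shows "weitz n X k (lfront n k I) J = 0"
proof (rule weitz_local)
  fix s b assume "s < k" "b < n"
  obtain p where p: "p \<in> {1,2,3::nat}" "p \<noteq> s" by (metis insertCI numeral_One numeral_eq_iff semiring_norm(85)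
        zero_neq_numeral)
  have "p < length (J[s := b])" using p J by auto
  moreover have "J[s := b] ! p \<in> set I" using p J by auto
  ultimately show "lfront n k I (J[s := b]) = 0" by (rule lfront_vanish)
next
  fix s t b c assume st: "s < t" "t < k" "b < n" "c < n"
  obtain p where p: "p \<in> {1,2,3::nat}" "p \<noteq> s" "p \<noteq> t"
  proof -
    have "card ({1,2,3::nat} - {s, t}) \<ge> 1"
    proof -
      have "card {1,2,3::nat} = 3" by simp
      then have "card ({1,2,3::nat} - {s, t}) \<ge> 3 - card {s,t}"
        by (metis card_Diff_subset_Int diff_card_le_card_Diff finite.emptyI finite.insertI)
      moreover have "card {s,t} \<le> 2" by (simp add: card_insert_le_m1)
      ultimately show ?thesis by linarith
    qed
    then obtain p where "p \<in> {1,2,3::nat} - {s, t}"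
      by (metis all_not_in_conv card.empty not_one_le_zero)
    then show ?thesis using that by blast
  qed
  have "p < length (J[s := b, t := c])" using p J by auto
  moreover have "J[s := b, t := c] ! p \<in> set I" using p J by auto
  ultimately show "lfront n k I (J[s := b, t := c]) = 0" by (rule lfront_vanish)
qed


lemma per_I:
  assumes nk: "n = 2 * k" "even k" "k \<ge> 4"
    and curv: "algebraic_curvature_tensor n R"
    and eps: "eps = 1 \<or> eps = -1"
    and weyl_vanish: "\<forall>\<xi>. is_form n k \<xi> \<and> hodge n k \<xi> = (\<lambda>xs. - eps * \<xi> xs)
                         \<longrightarrow> weyl_op n R k \<xi> = (\<lambda>_. 0)"
    and u_form: "is_form n k u"
    and u_sd: "hodge n k u = (\<lambda>xs. eps * u xs)"
    and R_eq: "\<forall>\<xi>. is_form n k \<xi> \<and> hodge n k \<xi> = (\<lambda>xs. eps * \<xi> xs)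
                 \<longrightarrow> weitz n R k \<xi> = (\<lambda>xs. lam * \<xi> xs - form_inner n k u \<xi> * u xs)"
    and I: "distinct I" "I \<in> idx_lists n k"
  shows "2 * (u I * u I) = lam - real k * (\<Sum>c<n. hsch n R c c) / (real n - 2)"
    and "\<And>b. b < n \<Longrightarrow> b \<notin> set I \<Longrightarrow> u I * u (I[0 := b]) = 0"
proof -
  define c0 where "c0 = real k * (\<Sum>c<n. hsch n R c c) / (real n - 2)"
  have ee: "eps * eps = 1" using eps by auto
  have lI: "length I = k" and sI: "set I \<subseteq> {..<n}" using I by (auto simp: idx_lists_def)
  define Y where "Y = filter (\<lambda>i. i \<notin> set I) [0..<n]"
  have Yd: "distinct Y" unfolding Y_def by simp
  have Ys: "set Y = {..<n} - set I" unfolding Y_def by auto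
  have lY: "length Y = k"
  proof -
    have "length Y = card (set Y)" using Yd by (simp add: distinct_card)
    also have "\<dots> = n - card (set I)" unfolding Ys using sI by (simp add: card_Diff_subset)
    also have "\<dots> = k" using I lI nk by (simp add: distinct_card)
    finally show ?thesis .
  qed
  have Yi: "Y \<in> idx_lists n k" using lY Ys by (auto simp: idx_lists_def)
  have pl: "plist n (I @ Y)" using I Yd Ys sI lI lY nk unfolding plist_def by auto
  have pl2: "plist n (Y @ I)" using plist_comm[OF pl] .
  define s where "s = levi_civita n (I @ Y)"
  have ss: "s * s = 1" using levi_sq[OF pl] by (simp add: s_def)
  have sY: "levi_civita n (Y @ I) = s" unfolding s_def
    using levi_blockswap[of Y I n] lY lI nk by simp
  have hE: "hodge n k (lfront n k Y) = (\<lambda>ys. s * lfront n k I ys)"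
    using hodge_lfront[OF nk(1,2) I Yi pl] by (simp add: s_def)
  have hF: "hodge n k (lfront n k I) = (\<lambda>ys. s * lfront n k Y ys)"
    using hodge_lfront[OF nk(1,2) Yd Yi I(2) pl2] by (simp add: sY)
  define P where "P = (\<lambda>xs. s * lfront n k Y xs + eps * lfront n k I xs)"
  define M where "M = (\<lambda>xs. s * lfront n k Y xs + (- eps) * lfront n k I xs)"
  have fP: "is_form n k P" unfolding P_def by (intro form_lin lfront_form)
  have fM: "is_form n k M" unfolding M_def by (intro form_lin lfront_form)
  have fE: "is_form n k (\<lambda>xs. s * lfront n k Y xs)" by (intro form_scale lfront_form)
  have hP: "hodge n k P = (\<lambda>xs. eps * P xs)"
    unfolding P_def hodge_lin hE hF using ss ee by (auto simp: fun_eq_iff algebra_simps)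
  have hM: "hodge n k M = (\<lambda>xs. - eps * M xs)"
    unfolding M_def hodge_lin hE hF using ss ee by (auto simp: fun_eq_iff algebra_simps)
  have wM: "weitz n (weyl n R) k M = (\<lambda>_. 0)"
    using weyl_vanish fM hM unfolding weyl_op_def by blast
  have RP: "weitz n R k P = (\<lambda>xs. lam * P xs - form_inner n k u P * u xs)"
    using R_eq fP hP by blast
  have S1: "(\<Sum>xs\<in>idx_lists n k. u xs * lfront n k Y xs) = fact k * (u I * s)"
  proof -
    have "(\<Sum>xs\<in>idx_lists n k. u xs * lfront n k Y xs) = fact k * (u I * lfront n k Y I)"
    proof (rule sum_forms[OF u_form lfront_form I])
      fix xs assume "xs \<in> idx_lists n k" "lfront n k Y xs \<noteq> 0"
      then have "plist n (xs @ Y)" by (auto simp: lfront_def levi_def2 split: if_splits)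
      then show "set xs = set I" using plist_support pl by blast
    qed
    then show ?thesis using I by (simp add: lfront_def s_def)
  qed
  have S2: "(\<Sum>xs\<in>idx_lists n k. u xs * lfront n k I xs) = fact k * (u Y * s)"
  proof -
    have "(\<Sum>xs\<in>idx_lists n k. u xs * lfront n k I xs) = fact k * (u Y * lfront n k I Y)"
    proof (rule sum_forms[OF u_form lfront_form Yd Yi])
      fix xs assume "xs \<in> idx_lists n k" "lfront n k I xs \<noteq> 0"
      then have "plist n (xs @ I)" by (auto simp: lfront_def levi_def2 split: if_splits)
      then show "set xs = set Y" using plist_support pl2 by blast
    qed
    then show ?thesis using Yi by (simp add: lfront_def sY)
  qed
  have nkk: "n - k = k" using nk by simp
  have "hodge n k u Y = (\<Sum>xs\<in>idx_lists n k. u xs * lfront n k Y xs) / fact k"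
    unfolding hodge_def nkk using Yi by (auto simp: lfront_def intro!: sum.cong)
  then have uY: "eps * u Y = u I * s" using S1 u_sd by (simp add: fun_eq_iff)
  have inner: "form_inner n k u P = 2 * u I"
  proof -
    have "form_inner n k u P = (s * (\<Sum>xs\<in>idx_lists n k. u xs * lfront n k Y xs) +
        eps * (\<Sum>xs\<in>idx_lists n k. u xs * lfront n k I xs)) / fact k"
      unfolding form_inner_def P_def by (simp add: algebra_simps sum.distrib sum_distrib_left)
    also have "\<dots> = s * (u I * s) + s * (eps * u Y)" unfolding S1 S2 by (simp add: field_simps)
    also have "\<dots> = 2 * u I" unfolding uY using ss by (simp add: algebra_simps)
    finally show ?thesis .
  qed
  have key: "lam * P J - 2 * u I * u J = c0 * (s * lfront n k Y J)"
    if J: "J \<in> idx_lists n k" "distinct J" "J ! 1 \<in> set I" "J ! 2 \<in> set I" "J ! 3 \<in> set I" for J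
  proof -
    have lJ: "length J = k" using J by (simp add: idx_lists_def)
    have far: "weitz n X k (lfront n k I) J = 0" for X
      by (rule weitz_far) (use lJ nk J in auto)
    have "weitz n R k P J = weitz n R k (\<lambda>xs. s * lfront n k Y xs) J"
      unfolding P_def weitz_lin_form[of n R k "\<lambda>xs. s * lfront n k Y xs"] far by simp
    moreover have "weitz n (weyl n R) k (\<lambda>xs. s * lfront n k Y xs) J = 0"
    proof -
      have "weitz n (weyl n R) k M J = 0" using wM by simp
      then show ?thesis
        unfolding M_def weitz_lin_form[of n "weyl n R" k "\<lambda>xs. s * lfront n k Y xs"] far by simp
    qed
    moreover have "weitz n R k (\<lambda>xs. s * lfront n k Y xs) J =
        weitz n (weyl n R) k (\<lambda>xs. s * lfront n k Y xs) J + c0 * (s * lfront n k Y J)"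
      unfolding c0_def by (rule weitz_decomp[OF curv nk(1) _ fE J(1,2)]) (use nk in simp)
    ultimately have "weitz n R k P J = c0 * (s * lfront n k Y J)" by simp
    then show ?thesis using RP inner by (simp add: fun_eq_iff)
  qed
  have I123: "I ! 1 \<in> set I" "I ! 2 \<in> set I" "I ! 3 \<in> set I" using lI nk by auto
  have "lam * P I - 2 * u I * u I = c0 * (s * lfront n k Y I)" by (rule key[OF I(2) I(1) I123])
  moreover have "lfront n k I I = 0" by (rule lfront_vanish[of 0]) (use lI nk in auto)
  moreover have "lfront n k Y I = s" using I by (simp add: lfront_def s_def)
  ultimately have "2 * (u I * u I) = lam - c0" unfolding P_def using ss by (simp add: algebra_simps)
  then show "2 * (u I * u I) = lam - real k * (\<Sum>c<n. hsch n R c c) / (real n - 2)" by (simp add: c0_def)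
  fix b assume b: "b < n" "b \<notin> set I"
  define J where "J = I[0 := b]"
  have Ji: "J \<in> idx_lists n k" using I b lI unfolding J_def idx_lists_def
    by (auto dest: subsetD[OF set_update_subset_insert])
  have Jd: "distinct J" unfolding J_def using I b by (auto intro: distinct_list_update)
  have J123: "J ! 1 \<in> set I" "J ! 2 \<in> set I" "J ! 3 \<in> set I" using lI nk by (auto simp: J_def)
  have "lam * P J - 2 * u I * u J = c0 * (s * lfront n k Y J)" by (rule key[OF Ji Jd J123])
  moreover have "lfront n k I J = 0" by (rule lfront_vanish[of 1]) (use J123 lI nk in \<open>auto simp: J_def\<close>)
  moreover have "lfront n k Y J = 0" by (rule lfront_vanish[of 0]) (use Ys b lI nk in \<open>auto simp: J_def\<close>)
  ultimately show "u I * u (I[0 := b]) = 0" unfolding P_def J_def by simp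
qed


lemma high_false:
  assumes nk: "n = 2 * k" "even k" "k \<ge> 4"
    and curv: "algebraic_curvature_tensor n R"
    and eps: "eps = 1 \<or> eps = -1"
    and weyl_vanish: "\<forall>\<xi>. is_form n k \<xi> \<and> hodge n k \<xi> = (\<lambda>xs. - eps * \<xi> xs)
                         \<longrightarrow> weyl_op n R k \<xi> = (\<lambda>_. 0)"
    and u_form: "is_form n k u" and u_nz: "u \<noteq> (\<lambda>_. 0)"
    and u_sd: "hodge n k u = (\<lambda>xs. eps * u xs)"
    and R_eq: "\<forall>\<xi>. is_form n k \<xi> \<and> hodge n k \<xi> = (\<lambda>xs. eps * \<xi> xs)
                 \<longrightarrow> weitz n R k \<xi> = (\<lambda>xs. lam * \<xi> xs - form_inner n k u \<xi> * u xs)"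
  shows False
proof -
  note P = per_I[OF nk curv eps weyl_vanish u_form u_sd R_eq]
  from u_nz obtain I where uI: "u I \<noteq> 0" by auto
  have Ii: "I \<in> idx_lists n k" using uI form_out[OF u_form] by blast
  have Id: "distinct I" using uI form_nondistinct[OF u_form] by blast
  have lI: "length I = k" and sI: "set I \<subseteq> {..<n}" using Ii by (auto simp: idx_lists_def)
  have "\<not> {..<n} \<subseteq> set I"
  proof
    assume "{..<n} \<subseteq> set I"
    then have "card {..<n} \<le> card (set I)" by (intro card_mono) auto
    then show False using Id lI nk by (simp add: distinct_card)
  qed
  then obtain b where b: "b < n" "b \<notin> set I" by auto
  define J where "J = I[0 := b]"
  have Ji: "J \<in> idx_lists n k" using Ii b lI unfolding J_def idx_lists_def
    by (auto dest: subsetD[OF set_update_subset_insert])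
  have Jd: "distinct J" unfolding J_def using Id b by (auto intro: distinct_list_update)
  have e1: "2 * (u I * u I) = 2 * (u J * u J)" using P(1)[OF Id Ii] P(1)[OF Jd Ji] by simp
  have e2: "u I * u J = 0" using P(2)[OF Id Ii b] by (simp add: J_def)
  have "(u I * u I) * (u I * u I) = (u I * u J) * (u I * u J)" using e1 by (simp add: algebra_simps)
  then show False using e2 uI by simp
qed


lemma hodge_u_at:
  assumes u: "is_form n k u" and I: "distinct I" "I \<in> idx_lists n k"
    and Y: "Y \<in> idx_lists n (n - k)" and pl: "plist n (I @ Y)"
  shows "hodge n k u Y = levi_civita n (I @ Y) * u I"
proof -
  have "(\<Sum>xs\<in>idx_lists n k. u xs * lfront n k Y xs) = fact k * (u I * lfront n k Y I)"
  proof (rule sum_forms[OF u lfront_form I])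
    fix xs assume "xs \<in> idx_lists n k" "lfront n k Y xs \<noteq> 0"
    then have "plist n (xs @ Y)" by (auto simp: lfront_def levi_def2 split: if_splits)
    then show "set xs = set I" using plist_support pl by blast
  qed
  moreover have "hodge n k u Y = (\<Sum>xs\<in>idx_lists n k. u xs * lfront n k Y xs) / fact k"
    unfolding hodge_def using Y by (auto simp: lfront_def intro!: sum.cong)
  ultimately show ?thesis using I by (simp add: lfront_def)
qed

lemma levi4: "levi_civita 4 [0,1,2,3] = 1" "levi_civita 4 [0,2,1,3] = -1" "levi_civita 4 [0,3,1,2] = 1"
proof -
  have pl: "plist 4 [0,1,2,3]" by (auto simp: plist_def)
  have "pf 4 [0,1,2,3] = id"
  proof
    fix i show "pf 4 [0,1,2,3] i = id i"
      by (cases "i < 4") (auto simp: pf_def less_Suc_eq numeral_eq_Suc)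
  qed
  then show a: "levi_civita 4 [0,1,2,3] = 1" using pl by (simp add: levi_def2)
  have "[0,1,2,3::nat][1 := [0,1,2,3::nat] ! 2, 2 := [0,1,2,3::nat] ! 1] = [0,2,1,3]" by simp
  then show "levi_civita 4 [0,2,1,3] = -1" using levi_swap[of 1 "[0,1,2,3::nat]" 2 4] a by simp
  have "[0,1,2,3::nat][1 := [0,1,2,3::nat] ! 3, 3 := [0,1,2,3::nat] ! 1] = [0,3,2,1]" by simp
  then have b: "levi_civita 4 [0,3,2,1] = -1" using levi_swap[of 1 "[0,1,2,3::nat]" 3 4] a by simp
  have "[0,3,2,1::nat][2 := [0,3,2,1::nat] ! 3, 3 := [0,3,2,1::nat] ! 2] = [0,3,1,2]" by simp
  then show "levi_civita 4 [0,3,1,2] = 1" using levi_swap[of 2 "[0,3,2,1::nat]" 3 4] b by simp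
qed


lemma all4: "(\<forall>a<(4::nat). P a) \<longleftrightarrow> P 0 \<and> P 1 \<and> P 2 \<and> P 3"
  by (auto simp: less_Suc_eq numeral_eq_Suc)

lemma sum4: "(\<Sum>a<(4::nat). f a) = f 0 + f 1 + f 2 + (f 3 :: real)"
  by (simp add: numeral_eq_Suc)

lemma dim4:
  assumes u: "is_form 4 2 u" and unz: "u \<noteq> (\<lambda>_. 0)" and eps: "eps = 1 \<or> eps = -1"
    and usd: "hodge 4 2 u = (\<lambda>xs. eps * u xs)"
  shows "\<exists>J c. orth_complex_structure 4 J \<and> (\<forall>a<4. \<forall>b<4. u [a, b] = c * J b a)"
proof -
  have hu: "hodge 4 2 u Y = levi_civita 4 (I @ Y) * u I"
    if "distinct I" "I \<in> idx_lists 4 2" "Y \<in> idx_lists 4 2" "plist 4 (I @ Y)" for I Y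
    using hodge_u_at[OF u that(1,2) _ that(4)] that(3) by simp
  have L4: "{..<4::nat} = {0,1,2,3}" by auto
  have h1: "eps * u [2,3] = u [0,1]"
    using hu[of "[0,1]" "[2,3]"] usd levi4 L4 by (auto simp: idx_lists_def plist_def fun_eq_iff)
  have h2: "eps * u [1,3] = - u [0,2]"
    using hu[of "[0,2]" "[1,3]"] usd levi4 L4 by (auto simp: idx_lists_def plist_def fun_eq_iff)
  have h3: "eps * u [1,2] = u [0,3]"
    using hu[of "[0,3]" "[1,2]"] usd levi4 L4 by (auto simp: idx_lists_def plist_def fun_eq_iff)
  have anti: "u [b, a] = - u [a, b]" if "a < 4" "b < 4" for a b
  proof (cases "a = b")
    case True
    then have "u [a, b] = 0" using form_nondistinct[OF u] by simp
    then show ?thesis using True by simp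
  next
    case False
    have "[a, b] \<in> idx_lists 4 2" using that by (auto simp: idx_lists_def)
    then show ?thesis using form_swap[OF u, of "[a,b]" 0 1] by simp
  qed
  have diag: "u [a, a] = 0" for a using form_nondistinct[OF u] by simp
  define p where "p = u [0,1]"
  define q where "q = u [0,2]"
  define r where "r = u [0,3]"
  have ee: "eps * eps = 1" using eps by auto
  have t23: "u [2,3] = eps * p" using h1 ee unfolding p_def by (metis mult.assoc mult_1)
  have t13: "u [1,3] = - eps * q" using h2 ee unfolding q_def by (metis mult.assoc mult_1 mult_minus_right mult_minus_left)
  have t12: "u [1,2] = eps * r" using h3 ee unfolding r_def by (metis mult.assoc mult_1)
  have tab: "u [0,0] = 0" "u [0,1] = p" "u [0,2] = q" "u [0,3] = r"
    "u [1,0] = - p" "u [1,1] = 0" "u [1,2] = eps * r" "u [1,3] = - eps * q"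
    "u [2,0] = - q" "u [2,1] = - (eps * r)" "u [2,2] = 0" "u [2,3] = eps * p"
    "u [3,0] = - r" "u [3,1] = eps * q" "u [3,2] = - (eps * p)" "u [3,3] = 0"
    using diag t23 t13 t12 anti[of 0 1] anti[of 0 2] anti[of 0 3] anti[of 1 2] anti[of 1 3] anti[of 2 3]
    unfolding p_def q_def r_def by auto
  define c where "c = sqrt (p * p + q * q + r * r)"
  have c2: "c * c = p * p + q * q + r * r" unfolding c_def
    by (simp add: add_nonneg_nonneg)
  have cnz: "c \<noteq> 0"
  proof
    assume "c = 0"
    then have pqr: "p = 0" "q = 0" "r = 0" using c2
      by (auto simp: add_nonneg_eq_0_iff)
    have "u xs = 0" for xs
    proof (cases "xs \<in> idx_lists 4 2")
      case False then show ?thesis using form_out[OF u] by blast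
    next
      case True
      then obtain a b where xs: "xs = [a, b]" "a < 4" "b < 4"
        by (auto simp: idx_lists_def numeral_eq_Suc length_Suc_conv)
      then have "a \<in> {0,1,2,3}" "b \<in> {0,1,2,3}" by auto
      then show ?thesis using tab pqr xs by auto
    qed
    then show False using unz by auto
  qed
  have sqnz: "p * p + (q * q + r * r) \<noteq> 0" using c2 cnz by (metis add.assoc mult_eq_0_iff)
  define J where "J = (\<lambda>i j. u [j, i] / c)"
  define A where "A = (\<lambda>i j. u [j, i])"
  have A1: "\<forall>a<4. \<forall>b<4. (\<Sum>x<4. A a x * A x b) = - (c * c) * kron a b"
    unfolding all4 sum4 A_def kron_def c2
    apply (simp only: tab)
    using eps by (auto simp: algebra_simps)
  have A2: "\<forall>a<4. \<forall>b<4. (\<Sum>x<4. A x a * A x b) = (c * c) * kron a b"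
    unfolding all4 sum4 A_def kron_def c2
    apply (simp only: tab)
    using eps by (auto simp: algebra_simps)
  have JA: "J i j = A i j / c" for i j by (simp add: J_def A_def)
  have "orth_complex_structure 4 J"
    unfolding orth_complex_structure_def JA
  proof (intro conjI allI impI)
    fix a b :: nat assume ab: "a < 4" "b < 4"
    have "(\<Sum>x<4. A a x / c * (A x b / c)) = (\<Sum>x<4. A a x * A x b) / (c * c)"
      by (simp add: sum_divide_distrib)
    then show "(\<Sum>x<4. A a x / c * (A x b / c)) = - kron a b" using A1 ab cnz by simp
    have "(\<Sum>x<4. A x a / c * (A x b / c)) = (\<Sum>x<4. A x a * A x b) / (c * c)"
      by (simp add: sum_divide_distrib)
    then show "(\<Sum>x<4. A x a / c * (A x b / c)) = kron a b" using A2 ab cnz by simp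
  qed
  moreover have "\<forall>a<4. \<forall>b<4. u [a, b] = c * J b a" using cnz by (simp add: J_def)
  ultimately show ?thesis by blast
qed


theorem proposition3p6:
  fixes n :: nat and R :: "nat \<Rightarrow> nat \<Rightarrow> nat \<Rightarrow> nat \<Rightarrow> real"
    and u :: "nat list \<Rightarrow> real" and eps lam :: real
  assumes n_pos: "0 < n" and n_half_even: "4 dvd n"
    and curv: "algebraic_curvature_tensor n R"
    and eps: "eps = 1 \<or> eps = -1"
    and weyl_vanish: "\<forall>\<xi>. is_form n (n div 2) \<xi> \<and> hodge n (n div 2) \<xi> = (\<lambda>xs. - eps * \<xi> xs)
                         \<longrightarrow> weyl_op n R (n div 2) \<xi> = (\<lambda>_. 0)"
    and u_form: "is_form n (n div 2) u" and u_nz: "u \<noteq> (\<lambda>_. 0)"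
    and u_sd: "hodge n (n div 2) u = (\<lambda>xs. eps * u xs)"
    and R_eq: "\<forall>\<xi>. is_form n (n div 2) \<xi> \<and> hodge n (n div 2) \<xi> = (\<lambda>xs. eps * \<xi> xs)
                 \<longrightarrow> weitz n R (n div 2) \<xi> =
                       (\<lambda>xs. lam * \<xi> xs - form_inner n (n div 2) u \<xi> * u xs)"
  shows "n = 4 \<and> (\<exists>J c. orth_complex_structure n J \<and>
            (\<forall>a<n. \<forall>b<n. u [a, b] = c * J b a))"
proof -
  obtain m where m: "n = 4 * m" using n_half_even by auto
  have nk: "n = 2 * (n div 2)" "even (n div 2)" using m by auto
  show ?thesis
  proof (cases "n = 4")
    case True
    have "n div 2 = 2" using True by simp
    then show ?thesis using dim4[of u eps] u_form u_nz eps u_sd True by simp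
  next
    case False
    then have "m \<ge> 2" using m n_pos by (cases m) auto
    then have k4: "n div 2 \<ge> 4" using m by simp
    have False using high_false[OF nk k4 curv eps weyl_vanish u_form u_nz u_sd R_eq] by simp
    then show ?thesis ..
  qed
qed

end
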